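(* Let $L,J\ge0$ and let $Q_{\ell,j}(x)$, $0\le\ell\le L$, $0\le j\le J$, be polynomials with nonnegative coefficients; set $Q_\ell(x,u)=\sum_{j=0}^JQ_{\ell,j}(x)u^j$. For an integer $m\ge0$ let $G_m(x,u)=\sum_{k\ge0}G_{m;k}(x)u^k$ be the formal power series solution of \[ G_m(x,u)=u^m+x\sum_{\ell=0}^LQ_\ell(x,u)\,\Delta^\ell G_m(x,u). \] Then for all $k\ge0$, $G_{m;k}(x)=F^{[\ge0]}_{k,m}(x)$, i.e. $G_{m;k}(x)$ is the generating function of allowed lattice paths starting at level $k$ and ending at level $m$.
   Context: $\Delta^\ell G(x,u)=\sum_{k\ge0}G_{k+\ell}(x)u^k$ for $G=\sum_kG_k(x)u^k$, $\ell\ge1$, and $\Delta^0G=G$. Step model: for each level $h\ge0$, the multiset $\mathcal S_h$ contains, for every triple $(\ell,j,r)$ with $0\le\ell\le L$, $0\le j\le\min(h,J)$, $r\ge0$, $[x^r]Q_{\ell,j}(x)\ne0$, one labelled step of displacement $(1+r,\ell-j)$ and weight $[x^r]Q_{\ell,j}(x)$. An allowed path starting at level $k$ is a finite sequence of labelled steps starting at $(0,k)$ such that each step belongs to $\mathcal S_h$, $h$ being the level of its starting point; its weight $w(p)$ is the product of its step weights (empty path: weight 1). $F^{[\ge0]}_{k,m}(x)=\sum_{n\ge0}\sum_pw(p)x^n$, summed over allowed paths from $(0,k)$ to $(n,m)$. *)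

theory Defs
  imports "HOL-Computational_Algebra.Polynomial_FPS"
begin

text \<open>Bivariate series in x and u are modelled as series in u whose coefficients
  are series in x: type real fps fps. The outer variable (fps_X) is u; the
  inner variable (fps_const fps_X) is x.\<close>

definition Delta :: "nat \<Rightarrow> 'a fps fps \<Rightarrow> 'a fps fps" where
  "Delta l G = Abs_fps (\<lambda>k. fps_nth G (k + l))"

definition Qbiv :: "nat \<Rightarrow> (nat \<Rightarrow> nat \<Rightarrow> real poly) \<Rightarrow> nat \<Rightarrow> real fps fps" where
  "Qbiv J Q l = (\<Sum>j\<le>J. fps_const (fps_of_poly (Q l j)) * fps_X ^ j)"

text \<open>A labelled step is a triple (l, j, r): displacement (1 + r, l - j),
  weight coeff (Q l j) r. A path is a list of labelled steps.\<close>
fun allowed :: "nat \<Rightarrow> nat \<Rightarrow> (nat \<Rightarrow> nat \<Rightarrow> real poly) \<Rightarrow> nat \<Rightarrow> (nat \<times> nat \<times> nat) list \<Rightarrow> bool" where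
  "allowed L J Q h [] = True"
| "allowed L J Q h ((l, j, r) # ps) =
     (l \<le> L \<and> j \<le> min h J \<and> coeff (Q l j) r \<noteq> 0 \<and> allowed L J Q (h + l - j) ps)"

fun end_level :: "nat \<Rightarrow> (nat \<times> nat \<times> nat) list \<Rightarrow> nat" where
  "end_level h [] = h"
| "end_level h ((l, j, r) # ps) = end_level (h + l - j) ps"

definition x_length :: "(nat \<times> nat \<times> nat) list \<Rightarrow> nat" where
  "x_length ps = sum_list (map (\<lambda>(l, j, r). 1 + r) ps)"

definition path_weight :: "(nat \<Rightarrow> nat \<Rightarrow> real poly) \<Rightarrow> (nat \<times> nat \<times> nat) list \<Rightarrow> real" where
  "path_weight Q ps = prod_list (map (\<lambda>(l, j, r). coeff (Q l j) r) ps)"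

definition F_paths :: "nat \<Rightarrow> nat \<Rightarrow> (nat \<Rightarrow> nat \<Rightarrow> real poly) \<Rightarrow> nat \<Rightarrow> nat \<Rightarrow> real fps" where
  "F_paths L J Q k m = Abs_fps (\<lambda>n.
     \<Sum>ps \<in> {ps. allowed L J Q k ps \<and> end_level k ps = m \<and> x_length ps = n}. path_weight Q ps)"

end

theory Submission imports Defs begin
unbundle fps_syntax

lemma Qbiv_nth: "Qbiv J Q l $ i = (if i \<le> J then fps_of_poly (Q l i) else 0)"
  unfolding Qbiv_def fps_sum_nth
  by (simp add: fps_X_power_mult_right_nth if_distrib sum.delta cong: if_cong)

lemma QD_nth: "(Qbiv J Q l * Delta l G) $ k = (\<Sum>j\<le>min k J. fps_of_poly (Q l j) * G $ (k + l - j))"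
proof -
  have "(Qbiv J Q l * Delta l G) $ k = (\<Sum>i=0..k. Qbiv J Q l $ i * G $ (k - i + l))"
    by (simp add: fps_mult_nth Delta_def)
  also have "\<dots> = (\<Sum>i\<in>{0..k}. if i \<le> J then fps_of_poly (Q l i) * G $ (k + l - i) else 0)"
    by (intro sum.cong) (auto simp: Qbiv_nth)
  also have "\<dots> = (\<Sum>j\<le>min k J. fps_of_poly (Q l j) * G $ (k + l - j))"
    by (rule sum.mono_neutral_cong_right) auto
  finally show ?thesis .
qed

lemma G_coeff:
  assumes eqn: "G = fps_X ^ m + fps_const fps_X * (\<Sum>l\<le>L. Qbiv J Q l * Delta l G)"
  shows "G $ k $ n = (if k = m \<and> n = 0 then 1 else 0) + (case n of 0 \<Rightarrow> 0 | Suc n' \<Rightarrow>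
     (\<Sum>l\<le>L. \<Sum>j\<le>min k J. \<Sum>r\<le>n'. coeff (Q l j) r * G $ (k+l-j) $ (n'-r)))"
proof -
  have "G $ k = (fps_X ^ m) $ k + fps_X * (\<Sum>l\<le>L. \<Sum>j\<le>min k J. fps_of_poly (Q l j) * G $ (k + l - j))"
    by (subst eqn) (simp add: fps_sum_nth QD_nth)
  then have "G $ k $ n = (if k = m \<and> n = 0 then 1 else 0) + (fps_X * (\<Sum>l\<le>L. \<Sum>j\<le>min k J. fps_of_poly (Q l j) * G $ (k + l - j))) $ n"
    by simp
  also have "(fps_X * (\<Sum>l\<le>L. \<Sum>j\<le>min k J. fps_of_poly (Q l j) * G $ (k + l - j))) $ n = (case n of 0 \<Rightarrow> 0 | Suc n' \<Rightarrow>
     (\<Sum>l\<le>L. \<Sum>j\<le>min k J. \<Sum>r\<le>n'. coeff (Q l j) r * G $ (k+l-j) $ (n'-r)))"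
    by (cases n) (simp_all only: fps_X_mult_nth, simp_all add: fps_sum_nth fps_mult_nth atLeast0AtMost)
  finally show ?thesis .
qed
definition PS where "PS L J Q m k n = {ps. allowed L J Q k ps \<and> end_level k ps = m \<and> x_length ps = n}"

lemma x_length_Nil[simp]: "x_length [] = 0" by (simp add: x_length_def)
lemma x_length_Cons[simp]: "x_length ((l,j,r)#ps) = Suc (r + x_length ps)" by (simp add: x_length_def)
lemma path_weight_Nil[simp]: "path_weight Q [] = 1" by (simp add: path_weight_def)
lemma path_weight_Cons[simp]: "path_weight Q ((l,j,r)#ps) = coeff (Q l j) r * path_weight Q ps"
  by (simp add: path_weight_def)

lemma x_length_0: "x_length ps = 0 \<longleftrightarrow> ps = []"
  by (cases ps) auto

lemma allowed_bounds: "allowed L J Q h ps \<Longrightarrow> (l,j,r) \<in> set ps \<Longrightarrow> l \<le> L \<and> j \<le> J \<and> r < x_length ps"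
  by (induction ps arbitrary: h) fastforce+

lemma length_le: "length ps \<le> x_length ps"
  by (induction ps) auto

lemma finite_PS: "finite (PS L J Q m k n)"
proof (rule finite_subset)
  show "PS L J Q m k n \<subseteq> {xs. set xs \<subseteq> {..L} \<times> {..J} \<times> {..n} \<and> length xs \<le> n}"
    unfolding PS_def using allowed_bounds length_le
    by clarsimp (metis less_imp_le_nat)
  show "finite {xs. set xs \<subseteq> {..L} \<times> {..J} \<times> {..n} \<and> length xs \<le> n}"
    by (intro finite_lists_length_le) auto
qed

lemma PS_0: "PS L J Q m k 0 = (if k = m then {[]} else {})"
  unfolding PS_def by (auto simp: x_length_0)

lemma PS_Suc: "PS L J Q m k (Suc n) = (\<lambda>(s,ps). s#ps) ` Sigma {(l,j,r). l \<le> L \<and> j \<le> min k J \<and> r \<le> n \<and> coeff (Q l j) r \<noteq> 0}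
   (\<lambda>(l,j,r). PS L J Q m (k+l-j) (n-r))"
proof safe
  fix ps assume "ps \<in> PS L J Q m k (Suc n)"
  then obtain l j r ps' where ps: "ps = (l,j,r)#ps'" and "allowed L J Q k ((l,j,r)#ps')"
    "end_level k ((l,j,r)#ps') = m" "x_length ((l,j,r)#ps') = Suc n"
    unfolding PS_def by (cases ps) auto
  then show "ps \<in> (\<lambda>(s,ps). s#ps) ` Sigma {(l,j,r). l \<le> L \<and> j \<le> min k J \<and> r \<le> n \<and> coeff (Q l j) r \<noteq> 0}
   (\<lambda>(l,j,r). PS L J Q m (k+l-j) (n-r))"
    by (intro image_eqI[where x="((l,j,r),ps')"]) (auto simp: PS_def)
qed (auto simp: PS_def)

lemma F_coeff: "F_paths L J Q k m $ n = (if k = m \<and> n = 0 then 1 else 0) + (case n of 0 \<Rightarrow> 0 | Suc n' \<Rightarrow>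
     (\<Sum>l\<le>L. \<Sum>j\<le>min k J. \<Sum>r\<le>n'. coeff (Q l j) r * F_paths L J Q (k+l-j) m $ (n'-r)))"
proof (cases n)
  case 0
  then show ?thesis unfolding F_paths_def PS_def[symmetric] by (simp add: PS_0)
next
  case (Suc n')
  define S where "S = {(l,j,r). l \<le> L \<and> j \<le> min k J \<and> r \<le> n' \<and> coeff (Q l j) r \<noteq> 0}"
  have finS: "finite S"
    by (rule finite_subset[of _ "{..L} \<times> {..min k J} \<times> {..n'}"]) (auto simp: S_def)
  have "F_paths L J Q k m $ n = sum (path_weight Q) (PS L J Q m k n)"
    unfolding F_paths_def PS_def by simp
  also have "\<dots> = sum (path_weight Q \<circ> (\<lambda>(s,ps). s#ps)) (Sigma S (\<lambda>(l,j,r). PS L J Q m (k+l-j) (n'-r)))"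
    unfolding Suc PS_Suc S_def[symmetric]
    by (rule sum.reindex) (auto simp: inj_on_def)
  also have "\<dots> = (\<Sum>(l,j,r)\<in>S. \<Sum>ps\<in>PS L J Q m (k+l-j) (n'-r). path_weight Q ((l,j,r)#ps))"
  proof -
    have "(path_weight Q \<circ> (\<lambda>(s,ps). s#ps)) = (\<lambda>(x,ps). path_weight Q (x#ps))" by auto
    moreover have "sum (\<lambda>(x,ps). path_weight Q (x#ps)) (Sigma S (\<lambda>(l,j,r). PS L J Q m (k+l-j) (n'-r)))
       = (\<Sum>x\<in>S. \<Sum>ps\<in>(\<lambda>(l,j,r). PS L J Q m (k+l-j) (n'-r)) x. path_weight Q (x#ps))"
      by (rule sum.Sigma[symmetric]) (auto simp: finS finite_PS)
    ultimately show ?thesis by (simp add: case_prod_unfold path_weight_def)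
  qed
  also have "\<dots> = (\<Sum>(l,j,r)\<in>S. coeff (Q l j) r * F_paths L J Q (k+l-j) m $ (n'-r))"
    by (intro sum.cong) (auto simp: F_paths_def PS_def sum_distrib_left)
  also have "\<dots> = (\<Sum>(l,j,r)\<in>{..L} \<times> {..min k J} \<times> {..n'}. coeff (Q l j) r * F_paths L J Q (k+l-j) m $ (n'-r))"
    by (rule sum.mono_neutral_left) (auto simp: S_def)
  also have "\<dots> = (\<Sum>l\<le>L. \<Sum>j\<le>min k J. \<Sum>r\<le>n'. coeff (Q l j) r * F_paths L J Q (k+l-j) m $ (n'-r))"
    by (simp add: sum.cartesian_product)
  finally show ?thesis using Suc by simp
qed

theorem lemma4:
  fixes L J m :: nat
    and Q :: "nat \<Rightarrow> nat \<Rightarrow> real poly"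
    and G :: "real fps fps"
  assumes nonneg: "\<And>l j r. l \<le> L \<Longrightarrow> j \<le> J \<Longrightarrow> coeff (Q l j) r \<ge> 0"
    and eqn: "G = fps_X ^ m + fps_const fps_X * (\<Sum>l\<le>L. Qbiv J Q l * Delta l G)"
  shows "\<forall>k. fps_nth G k = F_paths L J Q k m"
proof -
  have main: "\<forall>k. G $ k $ n = F_paths L J Q k m $ n" for n
  proof (induction n rule: less_induct)
    case (less n)
    show ?case
    proof
      fix k
      show "G $ k $ n = F_paths L J Q k m $ n"
      proof (cases n)
        case 0
        then show ?thesis by (simp add: G_coeff[OF eqn] F_coeff)
      next
        case (Suc n')
        have IH: "\<And>r k'. r \<le> n' \<Longrightarrow> G $ k' $ (n' - r) = F_paths L J Q k' m $ (n' - r)"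
          using less Suc by simp
        note g = G_coeff[OF eqn, of k n] and f = F_coeff[of L J Q k m n]
        show ?thesis
          apply (subst g, subst f)
          using IH Suc by (auto intro!: sum.cong)
      qed
    qed
  qed
  show ?thesis using main by (simp add: fps_eq_iff)
qed

end
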